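(* Let $m\ge 2$ be an integer and let $h:\mathbb R\to\mathbb R$ be a $2\pi$-periodic function of class $C^m$. Then $$0\le \frac{(-1)^m}{2}(m-1)!\,(m+1)!\int_0^{2\pi}\big(h(t)^2-\dot h(t)^2\big)dt+\frac{(-1)^{m-1}(m!)^2}{2\pi}\Big(\int_0^{2\pi}h(t)\,dt\Big)^2+\sum_{k=1}^{m-1}S_{m,k}\int_0^{2\pi}\big(h^{(k+1)}(t)+h^{(k-1)}(t)\big)^2dt.$$ Equality holds if and only if $h(t)=\sum_{n=0}^{m}\big(\alpha_n\cos(nt)+\beta_n\sin(nt)\big)$ for some real constants $\alpha_n,\beta_n$.
   Context: For $m\ge2$, let $P_m(t)=\prod_{j=2}^m(t-j^2)$ and let $S_{m,1},\dots,S_{m,m-1}$ be the coefficients of the polynomial $\mathcal S_m(t)=\frac{P_m(t)-P_m(1)}{t-1}=\sum_{k=1}^{m-1}S_{m,k}t^{k-1}$. $h^{(k)}$ is the $k$-th derivative, $\dot h=h'$. *)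

theory Defs
  imports "HOL-Analysis.Analysis" "HOL-Computational_Algebra.Polynomial"
begin

definition P_poly :: "nat \<Rightarrow> real poly" where
  "P_poly m = (\<Prod>j=2..m. [: -((real j)^2), 1 :])"

text \<open>S_m(t) = (P_m(t) - P_m(1)) / (t - 1), an exact polynomial division.\<close>
definition S_poly :: "nat \<Rightarrow> real poly" where
  "S_poly m = (P_poly m - [: poly (P_poly m) 1 :]) div [: -1, 1 :]"

definition S_coeff :: "nat \<Rightarrow> nat \<Rightarrow> real" where
  "S_coeff m k = coeff (S_poly m) (k - 1)"

definition C_class :: "nat \<Rightarrow> (real \<Rightarrow> real) \<Rightarrow> bool" where
  "C_class m h \<longleftrightarrow> (\<forall>k<m. \<forall>x. ((deriv ^^ k) h) differentiable (at x))
                     \<and> continuous_on UNIV ((deriv ^^ m) h)"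

end

theory Submission
  imports Defs
begin

lemma int_cos_int:
  fixes j :: int assumes "j \<noteq> 0"
  shows "((\<lambda>t. cos (of_int j * t)) has_integral 0) {0..2*pi}"
proof -
  have "((\<lambda>t. cos (of_int j * t)) has_integral (sin (of_int j * (2*pi)) / of_int j - sin (of_int j * 0) / of_int j)) {0..2*pi}"
    apply (rule fundamental_theorem_of_calculus)
     apply simp
    using assms
    apply (auto intro!: derivative_eq_intros simp: has_real_derivative_iff_has_vector_derivative[symmetric])
    done
  moreover have "sin (of_int j * (2*pi)) = 0"
    by (metis mult.commute sin_int_2pin)
  ultimately show ?thesis by simp
qed

lemma int_sin_int:
  fixes j :: int
  shows "((\<lambda>t. sin (of_int j * t)) has_integral 0) {0..2*pi}"
proof (cases "j = 0")
  case True then show ?thesis by simp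
next
  case False
  have "((\<lambda>t. sin (of_int j * t)) has_integral ((- cos (of_int j * (2*pi)) / of_int j) - (- cos (of_int j * 0) / of_int j))) {0..2*pi}"
    apply (rule fundamental_theorem_of_calculus)
     apply simp
    using False
    apply (auto intro!: derivative_eq_intros simp: has_real_derivative_iff_has_vector_derivative[symmetric])
    done
  moreover have "cos (of_int j * (2*pi)) = 1"
    by (metis mult.commute cos_int_2pin)
  ultimately show ?thesis by simp
qed

lemma icos: "integral {0..2*pi} (\<lambda>t. cos (of_int j * t)) = (if j = 0 then 2*pi else 0)"
proof (cases "j = 0")
  case True then show ?thesis by simp
next
  case False then show ?thesis using integral_unique[OF int_cos_int[OF False]] by simp
qed

lemma isin: "integral {0..2*pi} (\<lambda>t. sin (of_int j * t)) = 0"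
  using integral_unique[OF int_sin_int] by simp

lemma cont_int: "continuous_on UNIV (f::real\<Rightarrow>real) \<Longrightarrow> f integrable_on {a..b}"
  by (rule integrable_continuous_interval, erule continuous_on_subset, simp)

lemma int_add2: "continuous_on UNIV (f::real\<Rightarrow>real) \<Longrightarrow> continuous_on UNIV g \<Longrightarrow>
  integral {a..b} (\<lambda>t. f t + g t) = integral {a..b} f + integral {a..b} g"
  by (rule integral_add; rule cont_int; assumption)

lemma int_diff2: "continuous_on UNIV (f::real\<Rightarrow>real) \<Longrightarrow> continuous_on UNIV g \<Longrightarrow>
  integral {a..b} (\<lambda>t. f t - g t) = integral {a..b} f - integral {a..b} g"
  by (rule integral_diff; rule cont_int; assumption)

lemma ortho_cc: "integral {0..2*pi} (\<lambda>t. cos (real n * t) * cos (real k * t)) =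
   (if n = k then (if n = 0 then 2*pi else pi) else 0)"
proof -
  have e: "(\<lambda>t. cos (real n * t) * cos (real k * t)) =
     (\<lambda>t. cos (of_int (int n - int k) * t) / 2 + cos (of_int (int n + int k) * t) / 2)" (is "_ = (\<lambda>t. ?R t)")
    proof (rule ext)
    fix t
    have a: "real n * t - real k * t = of_int (int n - int k) * t" "real n * t + real k * t = of_int (int n + int k) * t" by (simp_all add: algebra_simps)
    show "cos (real n * t) * cos (real k * t) = ?R t" using cos_times_cos[of "real n * t" "real k * t"] unfolding a by simp
  qed
  have "integral {0..2*pi} (\<lambda>t. cos (of_int (int n - int k) * t) / 2 + cos (of_int (int n + int k) * t) / 2)
     = integral {0..2*pi} (\<lambda>t. cos (of_int (int n - int k) * t)) / 2 + integral {0..2*pi} (\<lambda>t. cos (of_int (int n + int k) * t)) / 2"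
    by (subst int_add2) (auto intro!: continuous_intros)
  then show ?thesis unfolding e icos by auto
qed

lemma ortho_ss: "integral {0..2*pi} (\<lambda>t. sin (real n * t) * sin (real k * t)) =
   (if n = k \<and> n \<noteq> 0 then pi else 0)"
proof -
  have e: "(\<lambda>t. sin (real n * t) * sin (real k * t)) =
     (\<lambda>t. cos (of_int (int n - int k) * t) / 2 - cos (of_int (int n + int k) * t) / 2)" (is "_ = (\<lambda>t. ?R t)")
    proof (rule ext)
    fix t
    have a: "real n * t - real k * t = of_int (int n - int k) * t" "real n * t + real k * t = of_int (int n + int k) * t" by (simp_all add: algebra_simps)
    show "sin (real n * t) * sin (real k * t) = ?R t" using sin_times_sin[of "real n * t" "real k * t"] unfolding a by simp
  qed
  have "integral {0..2*pi} (\<lambda>t. cos (of_int (int n - int k) * t) / 2 - cos (of_int (int n + int k) * t) / 2)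
     = integral {0..2*pi} (\<lambda>t. cos (of_int (int n - int k) * t)) / 2 - integral {0..2*pi} (\<lambda>t. cos (of_int (int n + int k) * t)) / 2"
    by (subst int_diff2) (auto intro!: continuous_intros)
  then show ?thesis unfolding e icos by auto
qed

lemma ortho_cs: "integral {0..2*pi} (\<lambda>t. cos (real n * t) * sin (real k * t)) = 0"
proof -
  have e: "(\<lambda>t. cos (real n * t) * sin (real k * t)) =
     (\<lambda>t. sin (of_int (int n + int k) * t) / 2 - sin (of_int (int n - int k) * t) / 2)" (is "_ = (\<lambda>t. ?R t)")
    proof (rule ext)
    fix t
    have a: "real n * t - real k * t = of_int (int n - int k) * t" "real n * t + real k * t = of_int (int n + int k) * t" by (simp_all add: algebra_simps)
    show "cos (real n * t) * sin (real k * t) = ?R t" using cos_times_sin[of "real n * t" "real k * t"] unfolding a by simp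
  qed
  have "integral {0..2*pi} (\<lambda>t. sin (of_int (int n + int k) * t) / 2 - sin (of_int (int n - int k) * t) / 2)
     = integral {0..2*pi} (\<lambda>t. sin (of_int (int n + int k) * t)) / 2 - integral {0..2*pi} (\<lambda>t. sin (of_int (int n - int k) * t)) / 2"
    by (subst int_diff2) (auto intro!: continuous_intros)
  then show ?thesis unfolding e isin by auto
qed

definition tp :: "nat \<Rightarrow> (nat \<Rightarrow> real) \<Rightarrow> (nat \<Rightarrow> real) \<Rightarrow> real \<Rightarrow> real" where
  "tp N \<alpha> \<beta> t = (\<Sum>n\<le>N. \<alpha> n * cos (real n * t) + \<beta> n * sin (real n * t))"

definition fc :: "nat \<Rightarrow> (real \<Rightarrow> real) \<Rightarrow> real" where
  "fc n f = integral {0..2*pi} (\<lambda>t. f t * cos (real n * t)) / pi"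

definition fs :: "nat \<Rightarrow> (real \<Rightarrow> real) \<Rightarrow> real" where
  "fs n f = integral {0..2*pi} (\<lambda>t. f t * sin (real n * t)) / pi"

definition en :: "nat \<Rightarrow> (real \<Rightarrow> real) \<Rightarrow> real" where
  "en n f = (if n = 0 then (fc 0 f)^2 / 2 else (fc n f)^2 + (fs n f)^2)"

lemma fs0[simp]: "fs 0 f = 0" by (simp add: fs_def)

lemma en_nonneg: "0 \<le> en n f" by (simp add: en_def)

lemma tp_cont[continuous_intros]: "continuous_on S (tp N \<alpha> \<beta>)"
  unfolding tp_def by (intro continuous_intros)

lemma sum_delta_mult: "(\<Sum>n\<le>N. (a::nat\<Rightarrow>real) n * (if n = k then c n else 0)) = (if k \<le> N then a k * c k else 0)"
proof -
  have "(\<Sum>n\<le>N. a n * (if n = k then c n else 0)) = (\<Sum>n\<le>N. if n = k then a k * c k else 0)"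
    by (rule sum.cong) auto
  also have "\<dots> = (if k \<le> N then a k * c k else 0)" by (subst sum.delta) auto
  finally show ?thesis .
qed

lemma int_tp_cos: "integral {0..2*pi} (\<lambda>t. tp N \<alpha> \<beta> t * cos (real k * t)) =
   (if k \<le> N then (if k = 0 then 2*pi*\<alpha> 0 else pi * \<alpha> k) else 0)"
proof -
  have e: "(\<lambda>t. tp N \<alpha> \<beta> t * cos (real k * t)) = (\<lambda>t. \<Sum>n\<le>N. \<alpha> n * (cos (real n * t) * cos (real k * t)) + \<beta> n * (cos (real k * t) * sin (real n * t)))"
    by (rule ext) (unfold tp_def sum_distrib_right, rule sum.cong, auto simp: algebra_simps)
  have "integral {0..2*pi} (\<lambda>t. \<Sum>n\<le>N. \<alpha> n * (cos (real n * t) * cos (real k * t)) + \<beta> n * (cos (real k * t) * sin (real n * t)))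
     = (\<Sum>n\<le>N. integral {0..2*pi} (\<lambda>t. \<alpha> n * (cos (real n * t) * cos (real k * t)) + \<beta> n * (cos (real k * t) * sin (real n * t))))"
    by (rule integral_sum) (auto intro!: cont_int continuous_intros)
  also have "\<dots> = (\<Sum>n\<le>N. \<alpha> n * (if n = k then (if n = 0 then 2*pi else pi) else 0))"
    by (rule sum.cong[OF refl], subst int_add2) (auto intro!: continuous_intros simp: ortho_cc ortho_cs)
  also have "\<dots> = (if k \<le> N then (if k = 0 then 2*pi*\<alpha> 0 else pi * \<alpha> k) else 0)"
    by (subst sum_delta_mult) auto
  finally show ?thesis unfolding e .
qed

lemma int_tp_sin: "integral {0..2*pi} (\<lambda>t. tp N \<alpha> \<beta> t * sin (real k * t)) =
   (if k \<le> N \<and> k \<noteq> 0 then pi * \<beta> k else 0)"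
proof -
  have e: "(\<lambda>t. tp N \<alpha> \<beta> t * sin (real k * t)) = (\<lambda>t. \<Sum>n\<le>N. \<alpha> n * (cos (real n * t) * sin (real k * t)) + \<beta> n * (sin (real n * t) * sin (real k * t)))"
    by (rule ext) (unfold tp_def sum_distrib_right, rule sum.cong, auto simp: algebra_simps)
  have "integral {0..2*pi} (\<lambda>t. \<Sum>n\<le>N. \<alpha> n * (cos (real n * t) * sin (real k * t)) + \<beta> n * (sin (real n * t) * sin (real k * t)))
     = (\<Sum>n\<le>N. integral {0..2*pi} (\<lambda>t. \<alpha> n * (cos (real n * t) * sin (real k * t)) + \<beta> n * (sin (real n * t) * sin (real k * t))))"
    by (rule integral_sum) (auto intro!: cont_int continuous_intros)
  also have "\<dots> = (\<Sum>n\<le>N. \<beta> n * (if n = k then (if k = 0 then 0 else pi) else 0))"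
    by (rule sum.cong[OF refl], subst int_add2) (auto intro!: continuous_intros simp: ortho_ss ortho_cs)
  also have "\<dots> = (if k \<le> N \<and> k \<noteq> 0 then pi * \<beta> k else 0)"
    by (subst sum_delta_mult) auto
  finally show ?thesis unfolding e .
qed

lemma fc_tp: "fc k (tp N \<alpha> \<beta>) = (if k \<le> N then (if k = 0 then 2 * \<alpha> 0 else \<alpha> k) else 0)"
  unfolding fc_def int_tp_cos by auto

lemma fs_tp: "fs k (tp N \<alpha> \<beta>) = (if k \<le> N \<and> k \<noteq> 0 then \<beta> k else 0)"
  unfolding fs_def int_tp_sin by auto

lemma int_f_tp:
  assumes f: "continuous_on UNIV f"
  shows "integral {0..2*pi} (\<lambda>t. f t * tp N \<alpha> \<beta> t) = pi * (\<Sum>n\<le>N. \<alpha> n * fc n f + \<beta> n * fs n f)"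
proof -
  have e: "(\<lambda>t. f t * tp N \<alpha> \<beta> t) = (\<lambda>t. \<Sum>n\<le>N. \<alpha> n * (f t * cos (real n * t)) + \<beta> n * (f t * sin (real n * t)))"
    by (rule ext) (unfold tp_def sum_distrib_left, rule sum.cong, auto simp: algebra_simps)
  have "integral {0..2*pi} (\<lambda>t. \<Sum>n\<le>N. \<alpha> n * (f t * cos (real n * t)) + \<beta> n * (f t * sin (real n * t)))
     = (\<Sum>n\<le>N. integral {0..2*pi} (\<lambda>t. \<alpha> n * (f t * cos (real n * t)) + \<beta> n * (f t * sin (real n * t))))"
    by (rule integral_sum) (auto intro!: cont_int continuous_intros f)
  also have "\<dots> = (\<Sum>n\<le>N. pi * (\<alpha> n * fc n f + \<beta> n * fs n f))"
    by (rule sum.cong[OF refl], subst int_add2) (auto intro!: continuous_intros f simp: fc_def fs_def field_simps)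
  also have "\<dots> = pi * (\<Sum>n\<le>N. \<alpha> n * fc n f + \<beta> n * fs n f)"
    by (simp add: sum_distrib_left)
  finally show ?thesis unfolding e .
qed

lemma int_tp_sq: "integral {0..2*pi} (\<lambda>t. (tp N \<alpha> \<beta> t)^2) =
    pi * (\<Sum>n\<le>N. if n = 0 then 2 * (\<alpha> 0)^2 else (\<alpha> n)^2 + (\<beta> n)^2)"
proof -
  have "integral {0..2*pi} (\<lambda>t. (tp N \<alpha> \<beta> t)^2) = integral {0..2*pi} (\<lambda>t. tp N \<alpha> \<beta> t * tp N \<alpha> \<beta> t)"
    by (simp add: power2_eq_square)
  also have "\<dots> = pi * (\<Sum>n\<le>N. \<alpha> n * fc n (tp N \<alpha> \<beta>) + \<beta> n * fs n (tp N \<alpha> \<beta>))"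
    by (rule int_f_tp) (intro continuous_intros)
  also have "\<dots> = pi * (\<Sum>n\<le>N. if n = 0 then 2 * (\<alpha> 0)^2 else (\<alpha> n)^2 + (\<beta> n)^2)"
    by (rule arg_cong[where f="\<lambda>x. pi * x"], rule sum.cong) (auto simp: fc_tp fs_tp power2_eq_square)
  finally show ?thesis .
qed

definition dev :: "nat \<Rightarrow> (real \<Rightarrow> real) \<Rightarrow> (nat \<Rightarrow> real) \<Rightarrow> (nat \<Rightarrow> real) \<Rightarrow> real" where
  "dev n f \<alpha> \<beta> = (if n = 0 then 2 * (\<alpha> 0 - fc 0 f / 2)^2 else (\<alpha> n - fc n f)^2 + (\<beta> n - fs n f)^2)"

lemma dev_nonneg: "0 \<le> dev n f \<alpha> \<beta>" by (simp add: dev_def)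

lemma int_sq_diff:
  assumes f: "continuous_on UNIV f"
  shows "integral {0..2*pi} (\<lambda>t. (f t - tp N \<alpha> \<beta> t)^2) =
     integral {0..2*pi} (\<lambda>t. (f t)^2) - pi * (\<Sum>n\<le>N. en n f) + pi * (\<Sum>n\<le>N. dev n f \<alpha> \<beta>)"
proof -
  have e: "(\<lambda>t. (f t - tp N \<alpha> \<beta> t)^2) = (\<lambda>t. ((f t)^2 + (tp N \<alpha> \<beta> t)^2) - 2 * (f t * tp N \<alpha> \<beta> t))"
    by (rule ext) (simp add: power2_eq_square algebra_simps)
  have "integral {0..2*pi} (\<lambda>t. ((f t)^2 + (tp N \<alpha> \<beta> t)^2) - 2 * (f t * tp N \<alpha> \<beta> t))
     = (integral {0..2*pi} (\<lambda>t. (f t)^2) + integral {0..2*pi} (\<lambda>t. (tp N \<alpha> \<beta> t)^2)) - 2 * integral {0..2*pi} (\<lambda>t. f t * tp N \<alpha> \<beta> t)"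
    by (subst int_diff2, (auto intro!: continuous_intros f)[2], subst int_add2, (auto intro!: continuous_intros f)[2]) simp
  also have "\<dots> = integral {0..2*pi} (\<lambda>t. (f t)^2) + pi * ((\<Sum>n\<le>N. if n = 0 then 2 * (\<alpha> 0)^2 else (\<alpha> n)^2 + (\<beta> n)^2)
        - 2 * (\<Sum>n\<le>N. \<alpha> n * fc n f + \<beta> n * fs n f))"
    unfolding int_tp_sq int_f_tp[OF f] by (simp add: algebra_simps)
  also have "(\<Sum>n\<le>N. if n = 0 then 2 * (\<alpha> 0)^2 else (\<alpha> n)^2 + (\<beta> n)^2) - 2 * (\<Sum>n\<le>N. \<alpha> n * fc n f + \<beta> n * fs n f)
      = (\<Sum>n\<le>N. dev n f \<alpha> \<beta>) - (\<Sum>n\<le>N. en n f)"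
  proof -
    have "(\<Sum>n\<le>N. if n = 0 then 2 * (\<alpha> 0)^2 else (\<alpha> n)^2 + (\<beta> n)^2) - 2 * (\<Sum>n\<le>N. \<alpha> n * fc n f + \<beta> n * fs n f)
       = (\<Sum>n\<le>N. (if n = 0 then 2 * (\<alpha> 0)^2 else (\<alpha> n)^2 + (\<beta> n)^2) - 2 * (\<alpha> n * fc n f + \<beta> n * fs n f))"
      by (simp add: sum_subtractf sum_distrib_left)
    also have "\<dots> = (\<Sum>n\<le>N. dev n f \<alpha> \<beta> - en n f)"
      by (rule sum.cong) (auto simp: dev_def en_def power2_eq_square algebra_simps)
    also have "\<dots> = (\<Sum>n\<le>N. dev n f \<alpha> \<beta>) - (\<Sum>n\<le>N. en n f)"
      by (simp add: sum_subtractf)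
    finally show ?thesis .
  qed
  finally show ?thesis unfolding e by (simp add: algebra_simps)
qed

definition trigpoly :: "(real \<Rightarrow> real) \<Rightarrow> bool" where
  "trigpoly g \<longleftrightarrow> (\<exists>N \<alpha> \<beta>. g = tp N \<alpha> \<beta>)"

lemma tp_pad:
  assumes "N \<le> M"
  shows "tp N \<alpha> \<beta> = tp M (\<lambda>n. if n \<le> N then \<alpha> n else 0) (\<lambda>n. if n \<le> N then \<beta> n else 0)"
proof (rule ext)
  fix t
  have "tp M (\<lambda>n. if n \<le> N then \<alpha> n else 0) (\<lambda>n. if n \<le> N then \<beta> n else 0) t
      = (\<Sum>n\<in>{..M}. if n \<in> {..N} then \<alpha> n * cos (real n * t) + \<beta> n * sin (real n * t) else 0)"
    unfolding tp_def by (rule sum.cong) auto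
  also have "\<dots> = (\<Sum>n\<in>{..M} \<inter> {..N}. \<alpha> n * cos (real n * t) + \<beta> n * sin (real n * t))"
    by (rule sum.inter_restrict[symmetric]) simp
  also have "{..M} \<inter> {..N} = {..N}" using assms by auto
  finally show "tp N \<alpha> \<beta> t = tp M (\<lambda>n. if n \<le> N then \<alpha> n else 0) (\<lambda>n. if n \<le> N then \<beta> n else 0) t"
    by (simp add: tp_def)
qed

lemma trigpoly_pad:
  assumes "trigpoly g"
  obtains N0 where "\<And>N. N \<ge> N0 \<Longrightarrow> \<exists>\<alpha> \<beta>. g = tp N \<alpha> \<beta>"
  using assms tp_pad unfolding trigpoly_def by blast

lemma tp_add: "(\<lambda>t. tp N \<alpha> \<beta> t + tp N \<gamma> \<delta> t) = tp N (\<lambda>n. \<alpha> n + \<gamma> n) (\<lambda>n. \<beta> n + \<delta> n)"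
  by (rule ext) (simp add: tp_def sum.distrib[symmetric] algebra_simps)

lemma tp_cmult: "(\<lambda>t. c * tp N \<alpha> \<beta> t) = tp N (\<lambda>n. c * \<alpha> n) (\<lambda>n. c * \<beta> n)"
  by (rule ext) (simp add: tp_def sum_distrib_left algebra_simps)

lemma trigpoly_add:
  assumes "trigpoly f" "trigpoly g"
  shows "trigpoly (\<lambda>t. f t + g t)"
proof -
  obtain N1 where 1: "\<And>N. N \<ge> N1 \<Longrightarrow> \<exists>\<alpha> \<beta>. f = tp N \<alpha> \<beta>" using trigpoly_pad[OF assms(1)] by blast
  obtain N2 where 2: "\<And>N. N \<ge> N2 \<Longrightarrow> \<exists>\<alpha> \<beta>. g = tp N \<alpha> \<beta>" using trigpoly_pad[OF assms(2)] by blast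
  obtain \<alpha> \<beta> where a: "f = tp (max N1 N2) \<alpha> \<beta>" using 1[of "max N1 N2"] by auto
  obtain \<gamma> \<delta> where b: "g = tp (max N1 N2) \<gamma> \<delta>" using 2[of "max N1 N2"] by auto
  show ?thesis unfolding a b tp_add trigpoly_def by blast
qed

lemma trigpoly_cmult: "trigpoly f \<Longrightarrow> trigpoly (\<lambda>t. c * f t)"
  unfolding trigpoly_def using tp_cmult by metis

lemma trigpoly_const: "trigpoly (\<lambda>t. c)"
proof -
  have "(\<lambda>t. c) = tp 0 (\<lambda>_. c) (\<lambda>_. 0)" by (rule ext) (simp add: tp_def)
  then show ?thesis unfolding trigpoly_def by blast
qed

lemma trigpoly_cos: "trigpoly (\<lambda>t. cos (real n * t))"
proof -
  have "(\<lambda>t. cos (real n * t)) = tp n (\<lambda>k. if k = n then 1 else 0) (\<lambda>_. 0)"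
  proof (rule ext)
    fix t
    have "tp n (\<lambda>k. if k = n then 1 else 0) (\<lambda>_. 0) t = (\<Sum>k\<le>n. if k = n then cos (real n * t) else 0)"
      unfolding tp_def by (rule sum.cong) auto
    also have "\<dots> = cos (real n * t)" by (subst sum.delta) auto
    finally show "cos (real n * t) = tp n (\<lambda>k. if k = n then 1 else 0) (\<lambda>_. 0) t" by simp
  qed
  then show ?thesis unfolding trigpoly_def by blast
qed

lemma trigpoly_sin: "trigpoly (\<lambda>t. sin (real n * t))"
proof -
  have "(\<lambda>t. sin (real n * t)) = tp n (\<lambda>_. 0) (\<lambda>k. if k = n then 1 else 0)"
  proof (rule ext)
    fix t
    have "tp n (\<lambda>_. 0) (\<lambda>k. if k = n then 1 else 0) t = (\<Sum>k\<le>n. if k = n then sin (real n * t) else 0)"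
      unfolding tp_def by (rule sum.cong) auto
    also have "\<dots> = sin (real n * t)" by (subst sum.delta) auto
    finally show "sin (real n * t) = tp n (\<lambda>_. 0) (\<lambda>k. if k = n then 1 else 0) t" by simp
  qed
  then show ?thesis unfolding trigpoly_def by blast
qed

lemma trigpoly_sum: "finite A \<Longrightarrow> (\<And>i. i \<in> A \<Longrightarrow> trigpoly (f i)) \<Longrightarrow> trigpoly (\<lambda>t. \<Sum>i\<in>A. f i t)"
proof (induction A rule: finite_induct)
  case empty then show ?case using trigpoly_const[of 0] by simp
next
  case (insert x F) then show ?case by (simp add: trigpoly_add)
qed

lemma trigpoly_cos_diff: "trigpoly (\<lambda>t. cos ((real n - real k) * t))"
proof (cases "k \<le> n")
  case True
  then have "(\<lambda>t. cos ((real n - real k) * t)) = (\<lambda>t. cos (real (n - k) * t))" by (simp add: of_nat_diff)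
  then show ?thesis using trigpoly_cos by simp
next
  case False
  then have "(\<lambda>t. cos ((real n - real k) * t)) = (\<lambda>t. cos (real (k - n) * t))"
  proof -
    have "\<And>t. cos ((real n - real k) * t) = cos (- ((real n - real k) * t))" by (simp only: cos_minus)
    then show ?thesis using False by (auto simp: of_nat_diff algebra_simps)
  qed
  then show ?thesis using trigpoly_cos by simp
qed

lemma trigpoly_sin_diff: "trigpoly (\<lambda>t. sin ((real n - real k) * t))"
proof (cases "k \<le> n")
  case True
  then have "(\<lambda>t. sin ((real n - real k) * t)) = (\<lambda>t. sin (real (n - k) * t))" by (simp add: of_nat_diff)
  then show ?thesis using trigpoly_sin by simp
next
  case False
  then have "(\<lambda>t. sin ((real n - real k) * t)) = (\<lambda>t. (-1) * sin (real (k - n) * t))"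
  proof -
    have "\<And>t. sin ((real n - real k) * t) = - sin (- ((real n - real k) * t))" by simp
    then show ?thesis using False by (auto simp: of_nat_diff algebra_simps)
  qed
  then show ?thesis using trigpoly_cmult[OF trigpoly_sin[of "k-n"], where c="-1"] by simp
qed

lemma trigpoly_cos_add: "trigpoly (\<lambda>t. cos ((real n + real k) * t))"
  using trigpoly_cos[of "n+k"] by simp

lemma trigpoly_sin_add: "trigpoly (\<lambda>t. sin ((real n + real k) * t))"
  using trigpoly_sin[of "n+k"] by simp

lemma trigpoly_half_add: "trigpoly f \<Longrightarrow> trigpoly g \<Longrightarrow> trigpoly (\<lambda>t. f t / 2 + g t / 2)"
  using trigpoly_add[OF trigpoly_cmult[of f "1/2"] trigpoly_cmult[of g "1/2"]] by simp

lemma trigpoly_half_diff: "trigpoly f \<Longrightarrow> trigpoly g \<Longrightarrow> trigpoly (\<lambda>t. f t / 2 - g t / 2)"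
  using trigpoly_add[OF trigpoly_cmult[of f "1/2"] trigpoly_cmult[of g "-1/2"]] by simp

lemma trigpoly_cc: "trigpoly (\<lambda>t. cos (real n * t) * cos (real k * t))"
proof -
  have "(\<lambda>t. cos (real n * t) * cos (real k * t)) = (\<lambda>t. cos ((real n - real k) * t) / 2 + cos ((real n + real k) * t) / 2)"
    by (rule ext) (simp add: cos_times_cos left_diff_distrib distrib_right add_divide_distrib)
  then show ?thesis using trigpoly_half_add[OF trigpoly_cos_diff trigpoly_cos_add] by simp
qed

lemma trigpoly_ss: "trigpoly (\<lambda>t. sin (real n * t) * sin (real k * t))"
proof -
  have "(\<lambda>t. sin (real n * t) * sin (real k * t)) = (\<lambda>t. cos ((real n - real k) * t) / 2 - cos ((real n + real k) * t) / 2)"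
    by (rule ext) (simp add: sin_times_sin left_diff_distrib distrib_right diff_divide_distrib)
  then show ?thesis using trigpoly_half_diff[OF trigpoly_cos_diff trigpoly_cos_add] by simp
qed

lemma trigpoly_sc: "trigpoly (\<lambda>t. sin (real n * t) * cos (real k * t))"
proof -
  have "(\<lambda>t. sin (real n * t) * cos (real k * t)) = (\<lambda>t. sin ((real n + real k) * t) / 2 + sin ((real n - real k) * t) / 2)"
    by (rule ext) (simp add: sin_times_cos left_diff_distrib distrib_right add_divide_distrib)
  then show ?thesis using trigpoly_half_add[OF trigpoly_sin_add trigpoly_sin_diff] by simp
qed

lemma trigpoly_cs: "trigpoly (\<lambda>t. cos (real n * t) * sin (real k * t))"
  using trigpoly_sc[of k n] by (simp add: mult.commute)

lemma trigpoly_mult: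
  assumes "trigpoly f" "trigpoly g"
  shows "trigpoly (\<lambda>t. f t * g t)"
proof -
  obtain N \<alpha> \<beta> where f: "f = tp N \<alpha> \<beta>" using assms(1) unfolding trigpoly_def by blast
  obtain M \<gamma> \<delta> where g: "g = tp M \<gamma> \<delta>" using assms(2) unfolding trigpoly_def by blast
  have e: "(\<lambda>t. f t * g t) = (\<lambda>t. \<Sum>n\<le>N. \<Sum>k\<le>M.
      \<alpha> n * \<gamma> k * (cos (real n * t) * cos (real k * t)) + \<alpha> n * \<delta> k * (cos (real n * t) * sin (real k * t))
    + \<beta> n * \<gamma> k * (sin (real n * t) * cos (real k * t)) + \<beta> n * \<delta> k * (sin (real n * t) * sin (real k * t)))"
    unfolding f g tp_def sum_product by (rule ext, rule sum.cong[OF refl], rule sum.cong[OF refl]) (simp add: algebra_simps)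
  show ?thesis unfolding e
    by (intro trigpoly_sum finite_atMost trigpoly_add trigpoly_cmult trigpoly_cc trigpoly_cs trigpoly_sc trigpoly_ss)
qed

lemma trigpoly_polyfun:
  fixes p :: "complex \<Rightarrow> real"
  assumes "real_polynomial_function p"
  shows "trigpoly (\<lambda>t. p (cis t))"
  using assms
proof (induction p rule: real_polynomial_function.induct)
  case (linear p)
  interpret bounded_linear p by fact
  have pz: "\<And>z. p z = Re z * p 1 + Im z * p \<i>"
  proof -
    fix z :: complex
    have "z = Re z *\<^sub>R 1 + Im z *\<^sub>R \<i>" by (simp add: complex_eq_iff)
    then have "p z = p (Re z *\<^sub>R 1 + Im z *\<^sub>R \<i>)" by simp
    also have "\<dots> = Re z * p 1 + Im z * p \<i>" by (simp add: add scale)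
    finally show "p z = Re z * p 1 + Im z * p \<i>" .
  qed
  have eq: "(\<lambda>t. p (cis t)) = (\<lambda>t. p 1 * cos (real 1 * t) + p \<i> * sin (real 1 * t))"
  proof (rule ext)
    fix t
    show "p (cis t) = p 1 * cos (real 1 * t) + p \<i> * sin (real 1 * t)"
      using pz[of "cis t"] by (simp add: mult.commute)
  qed
  show ?case unfolding eq by (rule trigpoly_add[OF trigpoly_cmult[OF trigpoly_cos] trigpoly_cmult[OF trigpoly_sin]])
next
  case (const c) then show ?case by (rule trigpoly_const)
next
  case (add f g) then show ?case by (intro trigpoly_add) auto
next
  case (mult f g) then show ?case by (intro trigpoly_mult) auto
qed

lemma per_nat:
  assumes per: "\<And>t. f (t + 2*pi) = f t"
  shows "f (t + 2*pi*real n) = f t"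
proof (induction n)
  case 0 then show ?case by simp
next
  case (Suc n)
  have "f (t + 2*pi*real (Suc n)) = f ((t + 2*pi*real n) + 2*pi)" by (simp add: algebra_simps)
  also have "\<dots> = f (t + 2*pi*real n)" by (rule per)
  finally show ?case using Suc by simp
qed

lemma per_int:
  assumes per: "\<And>t. f (t + 2*pi) = f t"
  shows "f (t + 2*pi* of_int k) = f t"
proof (cases "k \<ge> 0")
  case True
  then obtain n where "k = int n" by (metis nonneg_eq_int)
  then show ?thesis using per_nat[of f, OF per] by simp
next
  case False
  then obtain n where k: "k = - int n" by (metis nonneg_eq_int neg_0_le_iff_le minus_minus linorder_linear)
  have "f ((t - 2*pi*real n) + 2*pi*real n) = f (t - 2*pi*real n)" by (rule per_nat[of f, OF per])
  then show ?thesis using k by simp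
qed

lemma per_cis:
  assumes per: "\<And>t. f (t + 2*pi) = f t" and c: "cis a = cis b"
  shows "f a = f b"
proof -
  from c have "sin a = sin b \<and> cos a = cos b" by (metis cis.sel)
  then obtain n :: int where "a = b + 2*pi*n" using sin_cos_eq_iff by blast
  then show ?thesis using per_int[of f, OF per] by simp
qed

lemma density:
  fixes f :: "real \<Rightarrow> real"
  assumes f: "continuous_on UNIV f" and per: "\<And>t. f (t + 2*pi) = f t" and e: "e > 0"
  shows "\<exists>N \<alpha> \<beta>. \<forall>t. \<bar>f t - tp N \<alpha> \<beta> t\<bar> < e"
proof -
  define F where "F z = f (Arg z)" for z
  define G where "G z = f (Arg (- z) + pi)" for z
  have FG: "F z = G z" if "z \<noteq> 0" for z
  proof -
    have "cis (Arg (- z) + pi) = cis (Arg (-z)) * cis pi" by (simp add: minus_cis)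
    also have "\<dots> = sgn z" using that by (simp add: cis_Arg sgn_minus)
    also have "\<dots> = cis (Arg z)" using that by (simp add: cis_Arg)
    finally show ?thesis unfolding F_def G_def by (rule per_cis[of f, OF per, symmetric])
  qed
  have Fcis: "F (cis t) = f t" for t
    unfolding F_def by (rule per_cis[of f, OF per]) (simp add: cis_Arg)
  have fc: "isCont f x" for x using f by (simp add: continuous_on_eq_continuous_at)
  have contF: "continuous_on (sphere 0 1) F"
    unfolding continuous_on_eq_continuous_within
  proof
    fix z :: complex assume z: "z \<in> sphere 0 1"
    then have z0: "z \<noteq> 0" by auto
    show "continuous (at z within sphere 0 1) F"
    proof (cases "z \<in> \<real>\<^sub>\<le>\<^sub>0")
      case False
      have "isCont (\<lambda>z. f (Arg z)) z"
        by (rule continuous_at_compose[unfolded o_def, OF continuous_at_Arg[OF False] fc])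
      then show ?thesis unfolding F_def by (rule continuous_at_imp_continuous_at_within)
    next
      case True
      then have "- z \<notin> \<real>\<^sub>\<le>\<^sub>0" using z0 by (auto simp: complex_nonpos_Reals_iff complex_eq_iff)
      then have "isCont (\<lambda>w. Arg (- w)) z"
      proof -
        have "isCont (\<lambda>w. - w) z" by (intro continuous_intros)
        moreover have "isCont Arg (- z)" by (rule continuous_at_Arg) fact
        ultimately show ?thesis using isCont_o2[where f="\<lambda>w. - w" and g=Arg and a=z] by simp
      qed
      then have "isCont (\<lambda>w. Arg (- w) + pi) z" by (intro continuous_intros)
      then have "isCont G z"
        unfolding G_def by (rule continuous_at_compose[unfolded o_def, OF _ fc])
      then have "continuous (at z within sphere 0 1) G" by (rule continuous_at_imp_continuous_at_within)
      then show ?thesis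
        by (rule continuous_transform_within[where \<delta>=1]) (use z FG in \<open>auto simp: FG[symmetric]\<close>, metis FG norm_zero zero_neq_one)
    qed
  qed
  obtain p where p: "real_polynomial_function p" "\<And>z. z \<in> sphere 0 1 \<Longrightarrow> \<bar>F z - p z\<bar> < e"
    using Stone_Weierstrass_real_polynomial_function[OF compact_sphere contF e] by blast
  obtain N \<alpha> \<beta> where tpe: "(\<lambda>t. p (cis t)) = tp N \<alpha> \<beta>"
    using trigpoly_polyfun[OF p(1)] unfolding trigpoly_def by blast
  have "\<bar>f t - tp N \<alpha> \<beta> t\<bar> < e" for t
  proof -
    have "\<bar>F (cis t) - p (cis t)\<bar> < e" by (rule p(2)) simp
    then show ?thesis using Fcis[of t] fun_cong[OF tpe, of t] by simp
  qed
  then show ?thesis by blast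
qed

definition Sa :: "(real \<Rightarrow> real) \<Rightarrow> nat \<Rightarrow> real" where
  "Sa f n = (if n = 0 then fc 0 f / 2 else fc n f)"
definition Sb :: "(real \<Rightarrow> real) \<Rightarrow> nat \<Rightarrow> real" where
  "Sb f n = fs n f"

lemma dev_S: "dev n f (Sa f) (Sb f) = 0"
  by (simp add: dev_def Sa_def Sb_def)

lemma bessel_eq:
  assumes f: "continuous_on UNIV f"
  shows "integral {0..2*pi} (\<lambda>t. (f t - tp N (Sa f) (Sb f) t)^2) =
     integral {0..2*pi} (\<lambda>t. (f t)^2) - pi * (\<Sum>n\<le>N. en n f)"
  using int_sq_diff[OF f, of N "Sa f" "Sb f"] by (simp add: dev_S)

lemma bessel:
  assumes f: "continuous_on UNIV f"
  shows "pi * (\<Sum>n\<le>N. en n f) \<le> integral {0..2*pi} (\<lambda>t. (f t)^2)"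
proof -
  have "0 \<le> integral {0..2*pi} (\<lambda>t. (f t - tp N (Sa f) (Sb f) t)^2)"
    by (rule integral_nonneg) (auto intro!: cont_int continuous_intros f)
  then show ?thesis unfolding bessel_eq[OF f] by simp
qed

lemma parseval:
  fixes f :: "real \<Rightarrow> real"
  assumes f: "continuous_on UNIV f" and per: "\<And>t. f (t + 2*pi) = f t"
  shows "(\<lambda>n. en n f) sums (integral {0..2*pi} (\<lambda>t. (f t)^2) / pi)"
  unfolding sums_def_le
proof (rule LIMSEQ_I)
  fix r :: real assume r: "0 < r"
  define I where "I = integral {0..2*pi} (\<lambda>t. (f t)^2)"
  define \<epsilon> where "\<epsilon> = sqrt (r / 4)"
  have \<epsilon>: "\<epsilon> > 0" "\<epsilon>^2 = r / 4" using r by (auto simp: \<epsilon>_def)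
  obtain N0 \<alpha> \<beta> where app: "\<And>t. \<bar>f t - tp N0 \<alpha> \<beta> t\<bar> < \<epsilon>"
    using density[OF f per \<epsilon>(1)] by blast
  have "norm ((\<Sum>n\<le>N. en n f) - I / pi) < r" if N: "N \<ge> N0" for N
  proof -
    define \<alpha>' where "\<alpha>' = (\<lambda>n. if n \<le> N0 then \<alpha> n else 0)"
    define \<beta>' where "\<beta>' = (\<lambda>n. if n \<le> N0 then \<beta> n else 0)"
    have tpe: "tp N0 \<alpha> \<beta> = tp N \<alpha>' \<beta>'" unfolding \<alpha>'_def \<beta>'_def by (rule tp_pad[OF N])
    have A: "pi * (\<Sum>n\<le>N. en n f) \<le> I" unfolding I_def by (rule bessel[OF f])
    have "integral {0..2*pi} (\<lambda>t. (f t - tp N \<alpha>' \<beta>' t)^2) \<le> integral {0..2*pi} (\<lambda>t. \<epsilon>^2)"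
    proof (rule integral_le)
      show "(\<lambda>t. (f t - tp N \<alpha>' \<beta>' t)^2) integrable_on {0..2*pi}"
        by (auto intro!: cont_int continuous_intros f)
      show "(\<lambda>t. \<epsilon>^2) integrable_on {0..2*pi}" by (rule cont_int, rule continuous_on_const)
      fix t
      have "\<bar>f t - tp N \<alpha>' \<beta>' t\<bar> < \<epsilon>" using app[of t] tpe by simp
      then have "\<bar>f t - tp N \<alpha>' \<beta>' t\<bar>^2 \<le> \<epsilon>^2" by (intro power_mono) auto
      then show "(f t - tp N \<alpha>' \<beta>' t)^2 \<le> \<epsilon>^2" by simp
    qed
    also have "\<dots> = 2 * pi * \<epsilon>^2" by simp
    finally have B: "I - pi * (\<Sum>n\<le>N. en n f) + pi * (\<Sum>n\<le>N. dev n f \<alpha>' \<beta>') \<le> 2 * pi * \<epsilon>^2"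
      unfolding int_sq_diff[OF f] I_def .
    have "0 \<le> (\<Sum>n\<le>N. dev n f \<alpha>' \<beta>')" by (intro sum_nonneg dev_nonneg)
    then have "0 \<le> pi * (\<Sum>n\<le>N. dev n f \<alpha>' \<beta>')" by simp
    moreover have "2 * pi * \<epsilon>^2 = pi * (r / 2)" using \<epsilon>(2) by simp
    ultimately have C: "I - pi * (\<Sum>n\<le>N. en n f) \<le> pi * (r / 2)" using B by linarith
    have "I / pi - (\<Sum>n\<le>N. en n f) = (I - pi * (\<Sum>n\<le>N. en n f)) / pi"
      by (simp add: diff_divide_distrib)
    also have "\<dots> \<le> (pi * (r / 2)) / pi" by (rule divide_right_mono[OF C]) simp
    also have "\<dots> = r / 2" by simp
    finally have D: "I / pi - (\<Sum>n\<le>N. en n f) \<le> r / 2" .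
    have "(pi * (\<Sum>n\<le>N. en n f)) / pi \<le> I / pi" by (rule divide_right_mono[OF A]) simp
    then have E: "(\<Sum>n\<le>N. en n f) \<le> I / pi" by simp
    show ?thesis unfolding real_norm_def abs_less_iff using D E r by linarith
  qed
  then show "\<exists>no. \<forall>n\<ge>no. norm ((\<Sum>i\<le>n. en i f) - integral {0..2*pi} (\<lambda>t. (f t)^2) / pi) < r"
    unfolding I_def by blast
qed

lemma cos_2pi_nat: "cos (real n * (2*pi)) = 1"
  using cos_int_2pin[of "int n"] by (simp add: mult.commute)

lemma sin_2pi_nat: "sin (real n * (2*pi)) = 0"
  using sin_int_2pin[of "int n"] by (simp add: mult.commute)

lemma coeff_deriv:
  fixes f f' :: "real \<Rightarrow> real"
  assumes d: "\<And>x. (f has_real_derivative f' x) (at x)"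
    and c': "continuous_on UNIV f'" and per: "f (2*pi) = f 0"
  shows "fc n f' = real n * fs n f" "fs n f' = - real n * fc n f"
proof -
  have cf: "continuous_on UNIV f"
    by (rule continuous_at_imp_continuous_on) (use d DERIV_isCont in blast)
  have "((\<lambda>t. f' t * cos (real n * t) - real n * (f t * sin (real n * t))) has_integral
        (f (2*pi) * cos (real n * (2*pi)) - f 0 * cos (real n * 0))) {0..2*pi}"
    apply (rule fundamental_theorem_of_calculus)
     apply simp
    apply (auto intro!: derivative_eq_intros d[THEN DERIV_chain2] simp: has_real_derivative_iff_has_vector_derivative[symmetric])
    done
  then have "integral {0..2*pi} (\<lambda>t. f' t * cos (real n * t) - real n * (f t * sin (real n * t))) = 0"
    using per by (simp add: cos_2pi_nat integral_unique)
  then have "integral {0..2*pi} (\<lambda>t. f' t * cos (real n * t)) - real n * integral {0..2*pi} (\<lambda>t. f t * sin (real n * t)) = 0"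
    by (subst (asm) int_diff2) (auto intro!: continuous_intros c' cf)
  then show "fc n f' = real n * fs n f" unfolding fc_def fs_def by simp
  have "((\<lambda>t. f' t * sin (real n * t) + real n * (f t * cos (real n * t))) has_integral
        (f (2*pi) * sin (real n * (2*pi)) - f 0 * sin (real n * 0))) {0..2*pi}"
    apply (rule fundamental_theorem_of_calculus)
     apply simp
    apply (auto intro!: derivative_eq_intros d[THEN DERIV_chain2] simp: has_real_derivative_iff_has_vector_derivative[symmetric])
    done
  then have "integral {0..2*pi} (\<lambda>t. f' t * sin (real n * t) + real n * (f t * cos (real n * t))) = 0"
    by (simp add: sin_2pi_nat integral_unique)
  then have "integral {0..2*pi} (\<lambda>t. f' t * sin (real n * t)) + real n * integral {0..2*pi} (\<lambda>t. f t * cos (real n * t)) = 0"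
    by (subst (asm) int_add2) (auto intro!: continuous_intros c' cf)
  then have "integral {0..2*pi} (\<lambda>t. f' t * sin (real n * t)) = - real n * integral {0..2*pi} (\<lambda>t. f t * cos (real n * t))"
    by linarith
  then show "fs n f' = - real n * fc n f" unfolding fc_def fs_def by (simp add: divide_simps)
qed

lemma S_poly_eq: "poly (S_poly m) x * (x - 1) = poly (P_poly m) x - poly (P_poly m) 1"
proof -
  define p where "p = P_poly m - [: poly (P_poly m) 1 :]"
  have "poly p 1 = 0" by (simp add: p_def)
  then have "[: -1, 1 :] dvd p" using poly_eq_0_iff_dvd[of p 1] by simp
  then have e: "p = [: -1, 1 :] * S_poly m" unfolding S_poly_def p_def[symmetric] by (rule dvd_mult_div_cancel[symmetric])
  have "poly p x = (x - 1) * poly (S_poly m) x"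
    by (subst e) (simp add: algebra_simps)
  then show ?thesis by (simp add: p_def mult.commute)
qed

lemma P_poly_eval: "poly (P_poly m) x = (\<Prod>j=2..m. x - (real j)^2)"
  by (simp add: P_poly_def poly_prod)

lemma degree_P: "degree (P_poly m) = m - 1"
proof -
  have "degree (P_poly m) = (\<Sum>j=2..m. degree [: -((real j)^2), 1 :])"
    unfolding P_poly_def by (rule degree_prod_sum_eq) simp
  also have "\<dots> = card {2..m}" by simp
  finally show ?thesis by simp
qed

lemma degree_S: "degree (S_poly m) \<le> m - 2"
proof (cases "S_poly m = 0")
  case True then show ?thesis by simp
next
  case False
  define p where "p = P_poly m - [: poly (P_poly m) 1 :]"
  have "poly p 1 = 0" by (simp add: p_def)
  then have "[: -1, 1 :] dvd p" using poly_eq_0_iff_dvd[of p 1] by simp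
  then have e: "p = [: -1, 1 :] * S_poly m" unfolding S_poly_def p_def[symmetric] by (rule dvd_mult_div_cancel[symmetric])
  have "degree p \<le> m - 1" unfolding p_def by (rule degree_diff_le) (auto simp: degree_P)
  moreover have "degree p = 1 + degree (S_poly m)" unfolding e using False by (subst degree_mult_eq) auto
  ultimately show ?thesis by simp
qed

lemma S_sum_eq:
  assumes m: "m \<ge> 2"
  shows "(\<Sum>k=1..m-1. S_coeff m k * x^(k-1)) = poly (S_poly m) x"
proof -
  define q where "q = m - 2"
  have q: "m - 1 = Suc q" "q = m - 2" using m by (simp_all add: q_def)
  have "(\<Sum>k=1..m-1. S_coeff m k * x^(k-1)) = (\<Sum>k=Suc 0..Suc q. S_coeff m k * x^(k-1))" using q by simp
  also have "\<dots> = (\<Sum>i=0..q. coeff (S_poly m) i * x^i)"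
    by (subst sum.shift_bounds_cl_Suc_ivl) (simp add: S_coeff_def)
  also have "\<dots> = (\<Sum>i\<le>degree (S_poly m). coeff (S_poly m) i * x^i)"
  proof (rule sum.mono_neutral_right)
    show "{..degree (S_poly m)} \<subseteq> {0..q}" using degree_S[of m] q by auto
    show "\<forall>i\<in>{0..q} - {..degree (S_poly m)}. coeff (S_poly m) i * x ^ i = 0"
      by (auto simp: coeff_eq_0)
  qed simp
  also have "\<dots> = poly (S_poly m) x" by (simp add: poly_altdef)
  finally show ?thesis .
qed

lemma prod_one_minus_sq:
  "m \<ge> 1 \<Longrightarrow> (\<Prod>j=2..m. 1 - (real j)^2) = (-1)^(m-1) * fact (m-1) * fact (m+1) / 2"
proof (induction m rule: nat_induct_at_least)
  case base then show ?case by simp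
next
  case (Suc n)
  have "(\<Prod>j=2..Suc n. 1 - (real j)^2) = (1 - (real (Suc n))^2) * (\<Prod>j=2..n. 1 - (real j)^2)"
    using Suc by (subst prod.nat_ivl_Suc') auto
  also have "\<dots> = (1 - (real (Suc n))^2) * ((-1)^(n-1) * fact (n-1) * fact (n+1) / 2)" using Suc by simp
  also have "\<dots> = (-1)^(Suc n - 1) * fact (Suc n - 1) * fact (Suc n + 1) / 2"
  proof -
    obtain k where n: "n = Suc k" using Suc by (cases n) auto
    show ?thesis unfolding n by (simp add: fact_Suc algebra_simps power2_eq_square)
  qed
  finally show ?case .
qed

lemma prod_neg_sq:
  "m \<ge> 1 \<Longrightarrow> (\<Prod>j=2..m. (- ((real j)^2))) = (-1)^(m-1) * (fact m)^2"
proof (induction m rule: nat_induct_at_least)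
  case base then show ?case by simp
next
  case (Suc n)
  have "(\<Prod>j=2..Suc n. (- ((real j)^2))) = (- ((real (Suc n))^2)) * (\<Prod>j=2..n. (- ((real j)^2)))"
    using Suc by (subst prod.nat_ivl_Suc') auto
  also have "\<dots> = (- ((real (Suc n))^2)) * ((-1)^(n-1) * (fact n)^2)" using Suc by simp
  also have "\<dots> = (-1)^(Suc n - 1) * (fact (Suc n))^2"
  proof -
    obtain k where n: "n = Suc k" using Suc by (cases n) auto
    show ?thesis unfolding n by (simp add: fact_Suc algebra_simps power2_eq_square)
  qed
  finally show ?case .
qed

lemma weight_pos:
  assumes m: "m \<ge> 2"
  shows "(-1)^m / 2 * fact (m - 1) * fact (m + 1) * (1 - x)
     + (\<Sum>k=1..m-1. S_coeff m k * (1 - x)^2 * x^(k-1)) = (x - 1) * poly (P_poly m) x"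
proof -
  define A :: real where "A = (-1)^m / 2 * fact (m - 1) * fact (m + 1)"
  have P1: "poly (P_poly m) 1 = - A"
    using prod_one_minus_sq[of m] m by (simp add: A_def P_poly_eval power_eq_if)
  have "(\<Sum>k=1..m-1. S_coeff m k * (1 - x)^2 * x^(k-1)) = (1 - x)^2 * (\<Sum>k=1..m-1. S_coeff m k * x^(k-1))"
    unfolding sum_distrib_left by (rule sum.cong) (auto simp: algebra_simps)
  also have "\<dots> = (1 - x)^2 * poly (S_poly m) x" using S_sum_eq[OF m, of x] by simp
  also have "\<dots> = - (1 - x) * (poly (S_poly m) x * (x - 1))" by (simp add: power2_eq_square algebra_simps)
  also have "\<dots> = - (1 - x) * (poly (P_poly m) x + A)" unfolding S_poly_eq P1 by simp
  finally have h: "(\<Sum>k=1..m-1. S_coeff m k * (1 - x)^2 * x^(k-1)) = - (1 - x) * (poly (P_poly m) x + A)" .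
  show ?thesis unfolding A_def[symmetric] h by (simp add: algebra_simps)
qed

lemma weight_zero:
  assumes m: "m \<ge> 2"
  shows "(-1)^m / 2 * fact (m - 1) * fact (m + 1) + (-1)^(m-1) * (fact m)^2
     + (\<Sum>k=1..m-1. S_coeff m k * (1 - 0)^2 * 0^(k-1)) = (0::real)"
proof -
  have P1: "poly (P_poly m) 1 = - ((-1)^m / 2 * fact (m - 1) * fact (m + 1))"
    using prod_one_minus_sq[of m] m by (simp add: P_poly_eval power_eq_if)
  have P0: "poly (P_poly m) 0 = (-1)^(m-1) * (fact m)^2"
    using prod_neg_sq[of m] m by (simp add: P_poly_eval)
  have "(\<Sum>k=1..m-1. S_coeff m k * (1 - 0)^2 * 0^(k-1)) = poly (S_poly m) (0::real)"
    using S_sum_eq[OF m, of 0] by simp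
  also have "\<dots> = poly (P_poly m) 1 - poly (P_poly m) 0" using S_poly_eq[of m 0] by simp
  finally show ?thesis unfolding P1 P0 by simp
qed

lemma en_scale:
  assumes "fc n g = c * fc n f" "fs n g = c * fs n f"
  shows "en n g = c^2 * en n f"
  using assms by (cases "n = 0") (simp_all add: en_def power_mult_distrib algebra_simps)

lemma en_deriv:
  assumes "fc n g = real n * fs n f" "fs n g = - real n * fc n f"
  shows "en n g = (real n)^2 * en n f"
  using assms by (cases "n = 0") (simp_all add: en_def power_mult_distrib algebra_simps)

lemma fc_add: "continuous_on UNIV f \<Longrightarrow> continuous_on UNIV g \<Longrightarrow> fc n (\<lambda>t. f t + g t) = fc n f + fc n g"
  unfolding fc_def distrib_right by (subst int_add2) (auto intro!: continuous_intros simp: add_divide_distrib)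

lemma fs_add: "continuous_on UNIV f \<Longrightarrow> continuous_on UNIV g \<Longrightarrow> fs n (\<lambda>t. f t + g t) = fs n f + fs n g"
  unfolding fs_def distrib_right by (subst int_add2) (auto intro!: continuous_intros simp: add_divide_distrib)

lemma tp_per: "tp N \<alpha> \<beta> (t + 2*pi) = tp N \<alpha> \<beta> t"
proof -
  have "cos (real n * (t + 2*pi)) = cos (real n * t)" "sin (real n * (t + 2*pi)) = sin (real n * t)" for n
    by (simp_all add: distrib_left cos_add sin_add cos_2pi_nat sin_2pi_nat)
  then show ?thesis by (simp add: tp_def)
qed

lemma per_reduce:
  assumes per: "\<And>t. f (t + 2*pi) = f t"
  obtains s where "s \<in> {0..2*pi}" "f t = f s"
proof -
  define k where "k = \<lfloor>t / (2*pi)\<rfloor>"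
  define s where "s = t + 2*pi * of_int (- k)"
  have "of_int k \<le> t / (2*pi)" "t / (2*pi) < of_int k + 1" unfolding k_def by linarith+
  then have "2*pi * of_int k \<le> t" "t < 2*pi * (of_int k + 1)"
    by (simp_all add: field_simps)
  then have "s \<in> {0..2*pi}" unfolding s_def by (auto simp: algebra_simps)
  moreover have "f s = f t" unfolding s_def by (rule per_int[of f, OF per])
  ultimately show ?thesis using that by auto
qed

context
  fixes m :: nat and h :: "real \<Rightarrow> real"
  assumes m: "m \<ge> 2"
    and periodic: "\<And>t. h (t + 2 * pi) = h t"
    and smooth: "C_class m h"
begin

abbreviation "dd j \<equiv> (deriv ^^ j) h"

lemma dd_Suc: "dd (Suc j) = deriv (dd j)" by simp

lemma dd_DERIV: "j < m \<Longrightarrow> (dd j has_real_derivative dd (Suc j) x) (at x)"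
  using smooth unfolding C_class_def dd_Suc by (simp add: DERIV_deriv_iff_real_differentiable)

lemma dd_cont: "j \<le> m \<Longrightarrow> continuous_on UNIV (dd j)"
proof (cases "j = m")
  case True then show ?thesis using smooth unfolding C_class_def by simp
next
  case False
  assume "j \<le> m"
  with False have "j < m" by simp
  then show ?thesis
    by (intro continuous_at_imp_continuous_on ballI DERIV_isCont[OF dd_DERIV])
qed

lemma dd_per: "j \<le> m \<Longrightarrow> dd j (t + 2*pi) = dd j t"
proof (induction j arbitrary: t)
  case 0 then show ?case using periodic by simp
next
  case (Suc j)
  then have j: "j < m" by simp
  have e: "(\<lambda>x. dd j (x + 2*pi)) = dd j" using Suc.IH j by auto
  have "((\<lambda>x. dd j (x + 2*pi)) has_real_derivative dd (Suc j) (t + 2*pi)) (at t)"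
    using dd_DERIV[OF j, of "t + 2*pi"] by (simp add: DERIV_shift)
  then have "(dd j has_real_derivative dd (Suc j) (t + 2*pi)) (at t)" unfolding e .
  then show ?case using dd_DERIV[OF j, of t] DERIV_unique by blast
qed

lemma dd_coeff: "j < m \<Longrightarrow> fc n (dd (Suc j)) = real n * fs n (dd j) \<and> fs n (dd (Suc j)) = - real n * fc n (dd j)"
  using coeff_deriv[of "dd j" "dd (Suc j)" n] dd_DERIV[of j] dd_cont[of "Suc j"] dd_per[of j 0] by simp

lemma dd_en: "j \<le> m \<Longrightarrow> en n (dd j) = ((real n)^2)^j * en n h"
proof (induction j)
  case 0 then show ?case by simp
next
  case (Suc j)
  then have "en n (dd (Suc j)) = (real n)^2 * en n (dd j)"
    using dd_coeff[of j n] by (intro en_deriv) auto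
  then show ?case using Suc by simp
qed

lemma g_en:
  assumes k: "1 \<le> k" "k \<le> m - 1"
  shows "en n (\<lambda>t. dd (k + 1) t + dd (k - 1) t) = (1 - (real n)^2)^2 * ((real n)^2)^(k-1) * en n h"
proof -
  obtain i where i: "k = Suc i" using k by (cases k) auto
  have im: "Suc (Suc i) \<le> m" using k i m by simp
  have c1: "fc n (dd (Suc (Suc i))) = - ((real n)^2) * fc n (dd i)"
    using dd_coeff[of "Suc i" n] dd_coeff[of i n] im by (simp add: power2_eq_square)
  have c2: "fs n (dd (Suc (Suc i))) = - ((real n)^2) * fs n (dd i)"
    using dd_coeff[of "Suc i" n] dd_coeff[of i n] im by (simp add: power2_eq_square)
  have cont1: "continuous_on UNIV (dd (Suc (Suc i)))" using im by (intro dd_cont)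
  have cont2: "continuous_on UNIV (dd i)" using im by (intro dd_cont) simp
  have "en n (\<lambda>t. dd (Suc (Suc i)) t + dd i t) = (1 - (real n)^2)^2 * en n (dd i)"
  proof (rule en_scale)
    show "fc n (\<lambda>t. dd (Suc (Suc i)) t + dd i t) = (1 - (real n)^2) * fc n (dd i)"
      unfolding fc_add[OF cont1 cont2] c1 by (simp add: algebra_simps)
    show "fs n (\<lambda>t. dd (Suc (Suc i)) t + dd i t) = (1 - (real n)^2) * fs n (dd i)"
      unfolding fs_add[OF cont1 cont2] c2 by (simp add: algebra_simps)
  qed
  also have "\<dots> = (1 - (real n)^2)^2 * ((real n)^2)^i * en n h"
  proof -
    have ile: "i \<le> m" using im by simp
    show ?thesis unfolding dd_en[OF ile] by (simp add: mult.assoc)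
  qed
  finally have X: "en n (\<lambda>t. dd (Suc (Suc i)) t + dd i t) = (1 - (real n)^2)^2 * ((real n)^2)^i * en n h" .
  have kk: "k + 1 = Suc (Suc i)" "k - 1 = i" using i by simp_all
  show ?thesis unfolding kk by (rule X)
qed

end

lemma W_prod_nonneg:
  fixes n m :: nat assumes "n \<ge> 1" and m2: "m \<ge> 2"
  shows "0 \<le> ((real n)^2 - 1) * poly (P_poly m) ((real n)^2)
     \<and> (((real n)^2 - 1) * poly (P_poly m) ((real n)^2) = 0 \<longleftrightarrow> n \<le> m)"
proof (cases "n \<le> m")
  case True
  have z: "((real n)^2 - 1) * poly (P_poly m) ((real n)^2) = 0"
  proof (cases "n = 1")
    case True then show ?thesis by simp
  next
    case False
    with assms True have "n \<in> {2..m}" by auto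
    then have "(\<Prod>j=2..m. (real n)^2 - (real j)^2) = 0" by (intro prod_zero) auto
    then show ?thesis by (simp add: P_poly_eval)
  qed
  show ?thesis using True by (simp add: z)
next
  case False
  have "(\<Prod>j=2..m. (real n)^2 - (real j)^2) > 0"
  proof (intro prod_pos)
    fix j assume "j \<in> {2..m}"
    then have "real j < real n" using False by auto
    then have "(real j)^2 < (real n)^2" by (intro power_strict_mono) auto
    then show "(real n)^2 - (real j)^2 > 0" by simp
  qed
  moreover have "(real n)^2 - 1 > 0"
  proof -
    have "1 < real n" using False assms m2 by (cases "n = 1") auto
    then have "1^2 < (real n)^2" by (intro power_strict_mono) auto
    then show ?thesis by simp
  qed
  ultimately show ?thesis using False by (simp add: P_poly_eval)
qed

theorem proposition2p3:
  fixes m :: nat and h :: "real \<Rightarrow> real"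
  assumes m: "m \<ge> 2"
    and periodic: "\<And>t. h (t + 2 * pi) = h t"
    and smooth: "C_class m h"
  defines "Q \<equiv> (-1) ^ m / 2 * fact (m - 1) * fact (m + 1)
                 * integral {0..2*pi} (\<lambda>t. (h t)^2 - (deriv h t)^2)
               + (-1) ^ (m - 1) * (fact m)^2 / (2 * pi) * (integral {0..2*pi} h)^2
               + (\<Sum>k=1..m-1. S_coeff m k *
                   integral {0..2*pi} (\<lambda>t. ((deriv ^^ (k + 1)) h t + (deriv ^^ (k - 1)) h t)^2))"
  shows "0 \<le> Q \<and>
         (Q = 0 \<longleftrightarrow> (\<exists>\<alpha> \<beta> :: nat \<Rightarrow> real. \<forall>t.
              h t = (\<Sum>n=0..m. \<alpha> n * cos (real n * t) + \<beta> n * sin (real n * t))))"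
proof -
  define A :: real where "A = (-1)^m / 2 * fact (m - 1) * fact (m + 1)"
  define B :: real where "B = (-1)^(m-1) * (fact m)^2"
  define W where "W n = A * (1 - (real n)^2) + (if n = 0 then B else 0)
      + (\<Sum>k=1..m-1. S_coeff m k * (1 - (real n)^2)^2 * ((real n)^2)^(k-1))" for n
  define g where "g k t = (deriv ^^ (k + 1)) h t + (deriv ^^ (k - 1)) h t" for k t
  define I0 where "I0 = integral {0..2*pi} (\<lambda>t. (h t)^2)"
  define I1 where "I1 = integral {0..2*pi} (\<lambda>t. (deriv h t)^2)"
  define Ig where "Ig k = integral {0..2*pi} (\<lambda>t. (g k t)^2)" for k
  note ddc = dd_cont[OF m periodic smooth]
  note ddp = dd_per[OF m periodic smooth]
  have ch: "continuous_on UNIV h" using ddc[of 0] by simp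
  have cd: "continuous_on UNIV (deriv h)" using ddc[of 1] m by simp
  have pd: "deriv h (t + 2*pi) = deriv h t" for t using ddp[of 1 t] m by simp
  have s0: "(\<lambda>n. en n h) sums (I0 / pi)" unfolding I0_def by (rule parseval[OF ch periodic])
  have s1: "(\<lambda>n. (real n)^2 * en n h) sums (I1 / pi)"
  proof -
    have "(\<lambda>n. en n (deriv h)) sums (I1 / pi)" unfolding I1_def by (rule parseval[OF cd pd])
    moreover have "en n (deriv h) = (real n)^2 * en n h" for n
      using dd_en[OF m periodic smooth, of 1 n] m by simp
    ultimately show ?thesis by simp
  qed
  have sg: "(\<lambda>n. (1 - (real n)^2)^2 * ((real n)^2)^(k-1) * en n h) sums (Ig k / pi)"
    if k: "k \<in> {1..m-1}" for k
  proof -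
    have c: "continuous_on UNIV (g k)" unfolding g_def using k
      by (intro continuous_intros ddc[THEN continuous_on_subset]) auto
    have kk: "k + 1 \<le> m" "k - 1 \<le> m" using k m by auto
    have p: "g k (t + 2*pi) = g k t" for t unfolding g_def using ddp[OF kk(1), of t] ddp[OF kk(2), of t] by simp
    have "(\<lambda>n. en n (g k)) sums (Ig k / pi)" unfolding Ig_def by (rule parseval[OF c p])
    moreover have "en n (g k) = (1 - (real n)^2)^2 * ((real n)^2)^(k-1) * en n h" for n
      using g_en[OF m periodic smooth, of k n] k unfolding g_def[abs_def] by auto
    ultimately show ?thesis by simp
  qed
  define T where "T = A * (I0 / pi - I1 / pi) + B * en 0 h + (\<Sum>k=1..m-1. S_coeff m k * (Ig k / pi))"
  have sT: "(\<lambda>n. W n * en n h) sums T"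
  proof -
    have a: "(\<lambda>n. A * (en n h - (real n)^2 * en n h)) sums (A * (I0 / pi - I1 / pi))"
      by (intro sums_mult sums_diff s0 s1)
    have b: "(\<lambda>n. if n = 0 then B * en n h else 0) sums (B * en 0 h)"
      using sums_single[of 0 "\<lambda>n. B * en n h"] by simp
    have c: "(\<lambda>n. \<Sum>k=1..m-1. S_coeff m k * ((1 - (real n)^2)^2 * ((real n)^2)^(k-1) * en n h))
       sums (\<Sum>k=1..m-1. S_coeff m k * (Ig k / pi))"
      by (intro sums_sum sums_mult sg)
    have "(\<lambda>n. A * (en n h - (real n)^2 * en n h) + (if n = 0 then B * en n h else 0)
       + (\<Sum>k=1..m-1. S_coeff m k * ((1 - (real n)^2)^2 * ((real n)^2)^(k-1) * en n h))) sums T"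
      unfolding T_def by (intro sums_add a b c)
    moreover have "A * (en n h - (real n)^2 * en n h) + (if n = 0 then B * en n h else 0)
       + (\<Sum>k=1..m-1. S_coeff m k * ((1 - (real n)^2)^2 * ((real n)^2)^(k-1) * en n h)) = W n * en n h" for n
      unfolding W_def by (simp add: algebra_simps sum_distrib_left sum_distrib_right)
    ultimately show ?thesis by simp
  qed
  have QT: "Q = pi * T"
  proof -
    have i1: "integral {0..2*pi} (\<lambda>t. (h t)^2 - (deriv h t)^2) = I0 - I1"
      unfolding I0_def I1_def by (rule int_diff2) (auto intro!: continuous_intros ch cd)
    have fc0: "fc 0 h = integral {0..2*pi} h / pi" by (simp add: fc_def)
    have i2: "(integral {0..2*pi} h)^2 = 2 * pi^2 * en 0 h"
      unfolding en_def fc0 by (simp add: power_divide)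
    have "Q = A * (I0 - I1) + B / (2 * pi) * (2 * pi^2 * en 0 h) + (\<Sum>k=1..m-1. S_coeff m k * Ig k)"
      unfolding Q_def A_def B_def i1 i2[symmetric] Ig_def g_def by simp
    also have "\<dots> = pi * T" unfolding T_def
      by (simp add: algebra_simps diff_divide_distrib sum_distrib_left power2_eq_square)
    finally show ?thesis .
  qed
  have sQ: "(\<lambda>n. pi * (W n * en n h)) sums Q" unfolding QT by (rule sums_mult[OF sT])
  have W0: "W 0 = 0" unfolding W_def A_def B_def using weight_zero[OF m] by simp
  have Wn: "W n = ((real n)^2 - 1) * poly (P_poly m) ((real n)^2)" if "n \<ge> 1" for n
    using weight_pos[OF m, of "(real n)^2"] that unfolding W_def A_def by simp
  have Wnn: "0 \<le> W n" for n
    using W0 Wn W_prod_nonneg m by (cases "n = 0") auto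
  have Wpos: "W n > 0" if "n > m" for n
    using Wn[of n] W_prod_nonneg[of n m] m that by (auto simp: less_le)
  have Wz: "W n = 0" if "n \<le> m" for n
    using W0 Wn[of n] W_prod_nonneg[of n m] m that by (cases "n = 0") auto
  have tnn: "0 \<le> pi * (W n * en n h)" for n by (intro mult_nonneg_nonneg Wnn en_nonneg) simp
  have Qsum: "Q = (\<Sum>n. pi * (W n * en n h))" using sQ by (rule sums_unique)
  have Qnn: "0 \<le> Q" unfolding Qsum by (intro suminf_nonneg sums_summable[OF sQ] tnn)
  have Q0: "Q = 0 \<longleftrightarrow> (\<forall>n>m. en n h = 0)"
  proof -
    have "Q = 0 \<longleftrightarrow> (\<forall>n. pi * (W n * en n h) = 0)"
      unfolding Qsum by (rule suminf_eq_zero_iff[OF sums_summable[OF sQ] tnn])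
    also have "\<dots> \<longleftrightarrow> (\<forall>n>m. en n h = 0)"
    proof
      assume "\<forall>n. pi * (W n * en n h) = 0"
      then show "\<forall>n>m. en n h = 0" using Wpos by (metis less_irrefl mult_eq_0_iff pi_neq_zero)
    next
      assume "\<forall>n>m. en n h = 0"
      then show "\<forall>n. pi * (W n * en n h) = 0" using Wz by (metis mult_zero_left mult_zero_right not_le)
    qed
    finally show ?thesis .
  qed
  have char: "(\<forall>n>m. en n h = 0) \<longleftrightarrow> (\<exists>\<alpha> \<beta> :: nat \<Rightarrow> real. \<forall>t.
              h t = (\<Sum>n=0..m. \<alpha> n * cos (real n * t) + \<beta> n * sin (real n * t)))"
  proof
    assume z: "\<forall>n>m. en n h = 0"
    define TT where "TT = tp m (Sa h) (Sb h)"
    have "(\<lambda>n. en n h) sums (\<Sum>n\<in>{..m}. en n h)" by (rule sums_finite) (use z in auto)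
    then have "(\<Sum>n\<le>m. en n h) = I0 / pi" using s0 sums_unique2 by blast
    then have "integral {0..2*pi} (\<lambda>t. (h t - TT t)^2) = 0"
      unfolding TT_def bessel_eq[OF ch] I0_def[symmetric] by simp
    then have "\<forall>x\<in>{0..2*pi}. (h x - TT x)^2 = 0"
      by (subst (asm) integral_eq_0_iff) (auto intro!: continuous_intros continuous_on_subset[OF ch] simp: TT_def)
    then have eq01: "h x = TT x" if "x \<in> {0..2*pi}" for x using that by auto
    have "h t = TT t" for t
    proof -
      have per2: "(h (t + 2*pi) - TT (t + 2*pi)) = h t - TT t" for t
        using periodic tp_per unfolding TT_def by simp
      obtain s where "s \<in> {0..2*pi}" "h t - TT t = h s - TT s"
        using per_reduce[of "\<lambda>t. h t - TT t", OF per2] by blast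
      then show ?thesis using eq01 by simp
    qed
    then show "\<exists>\<alpha> \<beta> :: nat \<Rightarrow> real. \<forall>t. h t = (\<Sum>n=0..m. \<alpha> n * cos (real n * t) + \<beta> n * sin (real n * t))"
      unfolding TT_def tp_def by (intro exI[of _ "Sa h"] exI[of _ "Sb h"]) (simp add: atLeast0AtMost)
  next
    assume "\<exists>\<alpha> \<beta> :: nat \<Rightarrow> real. \<forall>t. h t = (\<Sum>n=0..m. \<alpha> n * cos (real n * t) + \<beta> n * sin (real n * t))"
    then obtain \<alpha> \<beta> where ab: "\<forall>t. h t = (\<Sum>n=0..m. \<alpha> n * cos (real n * t) + \<beta> n * sin (real n * t))" by blast
    have "h = tp m \<alpha> \<beta>" using ab by (auto simp: tp_def atLeast0AtMost)
    then show "\<forall>n>m. en n h = 0" by (auto simp: en_def fc_tp fs_tp)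
  qed
  show ?thesis using Qnn Q0 char by simp
qed

end
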